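(* The family $\{\varphi_{[1],0}[\cdot-2l]\}_{l=0}^{N/2-1}\cup\{\varphi_{[1],1}[\cdot-2l]\}_{l=0}^{N/2-1}$ is an orthonormal basis of $\Pi[N]$. Consequently, for $\mu\in\{0,1\}$, letting $\mathcal C^{\mu}$ be the linear span of $\{\varphi_{[1],\mu}[\cdot-2l]\}_{l=0}^{N/2-1}$, the space $\mathcal C^{1}$ is the orthogonal complement of $\mathcal C^{0}$ in $\Pi[N]$, and the orthogonal projection of any $x\in\Pi[N]$ onto $\mathcal C^{\mu}$ is $$x^{\mu}[k]=\sum_{l=0}^{N/2-1}c^{\mu}[l]\,\varphi_{[1],\mu}[k-2l],\qquad c^{\mu}[l]=\langle x,\varphi_{[1],\mu}[\cdot-2l]\rangle=\sum_{k=0}^{N-1}\varphi_{[1],\mu}[k-2l]\,x[k].$$ Here the DFTs are explicitly $\hat\varphi_{[1],0}[n]=-i\beta[n]$ ($0<n<N/2$), $i\beta[n]$ ($N/2<n<N$), $\sqrt2$ ($n=0$), $0$ ($n=N/2$); and $\hat\varphi_{[1],1}[n]=-i\alpha[n]$ ($0<n<N/2$), $i\alpha[n]$ ($N/2<n<N$), $0$ ($n=0$), $-\sqrt2$ ($n=N/2$).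
   Context: Let $N=2^{J}$ with $J\ge 1$ an integer and $\omega=e^{2\pi i/N}$. $\Pi[N]$ denotes the real vector space of real-valued $N$-periodic sequences $x=\{x[k]\}_{k\in\mathbb Z}$, with inner product $\langle x,y\rangle=\sum_{k=0}^{N-1}x[k]y[k]$. The DFT of an $N$-periodic sequence is $\hat x[n]=\sum_{k=0}^{N-1}x[k]\omega^{-kn}$, with inverse $x[k]=\frac1N\sum_{n=0}^{N-1}\hat x[n]\omega^{kn}$. Fix an integer $r\ge1$; let $U[n]=\tfrac12\big(\cos^{4r}\tfrac{\pi n}{N}+\sin^{4r}\tfrac{\pi n}{N}\big)$, $\beta[n]=\cos^{2r}\tfrac{\pi n}{N}/\sqrt{U[n]}$, $\alpha[n]=\omega^{n}\sin^{2r}\tfrac{\pi n}{N}/\sqrt{U[n]}$. The first-level wavelet packets $\psi_{[1],0},\psi_{[1],1}\in\Pi[N]$ have DFTs $\hat\psi_{[1],0}=\beta$, $\hat\psi_{[1],1}=\alpha$. Known fact (may be assumed): $\{\psi_{[1],\mu}[\cdot-2l]:\mu\in\{0,1\},\,0\le l<N/2\}$ is an orthonormal basis of $\Pi[N]$. The complementary wavelet packets $\varphi_{[1],\mu}\in\Pi[N]$ are defined by DFT $\hat\varphi_{[1],\mu}[n]=-i\hat\psi_{[1],\mu}[n]$ for $0<n<N/2$, $=i\hat\psi_{[1],\mu}[n]$ for $N/2<n<N$, and $=\hat\psi_{[1],\mu}[n]$ for $n\in\{0,N/2\}$ (indices mod $N$). *)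

theory Defs
  imports "HOL-Analysis.Analysis"
begin

text \<open>Real-valued sequences indexed by the integers; Pi[N] = the N-periodic ones.\<close>

definition periodic_seq :: "nat \<Rightarrow> (int \<Rightarrow> real) \<Rightarrow> bool" where
  "periodic_seq N x \<longleftrightarrow> (\<forall>k. x (k + int N) = x k)"

definition ipN :: "nat \<Rightarrow> (int \<Rightarrow> real) \<Rightarrow> (int \<Rightarrow> real) \<Rightarrow> real" where
  "ipN N x y = (\<Sum>k<N. x (int k) * y (int k))"

definition dft :: "nat \<Rightarrow> (int \<Rightarrow> real) \<Rightarrow> int \<Rightarrow> complex" where
  "dft N x n = (\<Sum>k<N. complex_of_real (x (int k)) * cis (- 2 * pi * real k * real_of_int n / real N))"

definition U_fun :: "nat \<Rightarrow> nat \<Rightarrow> int \<Rightarrow> real" where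
  "U_fun r N n = (cos (pi * real_of_int n / real N) ^ (4*r) + sin (pi * real_of_int n / real N) ^ (4*r)) / 2"

definition beta_fun :: "nat \<Rightarrow> nat \<Rightarrow> int \<Rightarrow> complex" where
  "beta_fun r N n = complex_of_real (cos (pi * real_of_int n / real N) ^ (2*r) / sqrt (U_fun r N n))"

definition alpha_fun :: "nat \<Rightarrow> nat \<Rightarrow> int \<Rightarrow> complex" where
  "alpha_fun r N n = cis (2 * pi * real_of_int n / real N)
      * complex_of_real (sin (pi * real_of_int n / real N) ^ (2*r) / sqrt (U_fun r N n))"

definition hat_psi :: "nat \<Rightarrow> nat \<Rightarrow> nat \<Rightarrow> int \<Rightarrow> complex" where
  "hat_psi r N \<mu> n = (if \<mu> = 0 then beta_fun r N n else alpha_fun r N n)"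

definition hat_phi :: "nat \<Rightarrow> nat \<Rightarrow> nat \<Rightarrow> int \<Rightarrow> complex" where
  "hat_phi r N \<mu> n =
     (let m = n mod int N in
      if 0 < m \<and> m < int N div 2 then - \<i> * hat_psi r N \<mu> n
      else if int N div 2 < m then \<i> * hat_psi r N \<mu> n
      else hat_psi r N \<mu> n)"

text \<open>Inverse DFT; the sequences are real-valued, and we take the real part so that
  they are elements of the real space Pi[N].\<close>
definition idft_re :: "nat \<Rightarrow> (int \<Rightarrow> complex) \<Rightarrow> int \<Rightarrow> real" where
  "idft_re N X k = Re ((1 / of_nat N) * (\<Sum>n<N. X (int n) * cis (2 * pi * real_of_int k * real n / real N)))"

definition psi1 :: "nat \<Rightarrow> nat \<Rightarrow> nat \<Rightarrow> int \<Rightarrow> real" where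
  "psi1 r N \<mu> = idft_re N (hat_psi r N \<mu>)"

definition phi1 :: "nat \<Rightarrow> nat \<Rightarrow> nat \<Rightarrow> int \<Rightarrow> real" where
  "phi1 r N \<mu> = idft_re N (hat_phi r N \<mu>)"

definition orthonormal_basis_Pi :: "nat \<Rightarrow> 'i set \<Rightarrow> ('i \<Rightarrow> int \<Rightarrow> real) \<Rightarrow> bool" where
  "orthonormal_basis_Pi N I f \<longleftrightarrow>
     (\<forall>i\<in>I. periodic_seq N (f i)) \<and>
     (\<forall>i\<in>I. \<forall>j\<in>I. ipN N (f i) (f j) = (if i = j then 1 else 0)) \<and>
     (\<forall>x. periodic_seq N x \<longrightarrow> (\<exists>c. x = (\<lambda>k. \<Sum>i\<in>I. c i * f i k)))"

definition shift_span :: "nat \<Rightarrow> (int \<Rightarrow> real) \<Rightarrow> (int \<Rightarrow> real) set" where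
  "shift_span N g = {(\<lambda>k. \<Sum>l<N div 2. c l * g (k - 2 * int l)) | c. True}"

definition orth_complement_Pi :: "nat \<Rightarrow> (int \<Rightarrow> real) set \<Rightarrow> (int \<Rightarrow> real) set" where
  "orth_complement_Pi N C = {y. periodic_seq N y \<and> (\<forall>z\<in>C. ipN N y z = 0)}"

definition is_orth_proj :: "nat \<Rightarrow> (int \<Rightarrow> real) set \<Rightarrow> (int \<Rightarrow> real) \<Rightarrow> (int \<Rightarrow> real) \<Rightarrow> bool" where
  "is_orth_proj N C x y \<longleftrightarrow> y \<in> C \<and> (\<forall>z\<in>C. ipN N (\<lambda>k. x k - y k) z = 0)"

end

theory Submission
  imports Defs
begin

definition E :: "nat \<Rightarrow> int \<Rightarrow> complex" where
  "E N a = cis (2 * pi * real_of_int a / real N)"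

lemma E_add: "E N (a + b) = E N a * E N b"
  by (simp add: E_def cis_mult add_divide_distrib distrib_left)

lemma E_zero[simp]: "E N 0 = 1" by (simp add: E_def)

lemma E_neg: "E N (- a) = cnj (E N a)"
  by (simp add: E_def cis_cnj)

lemma E_dvd: assumes "N > 0" "int N dvd a" shows "E N a = 1"
proof -
  obtain j where j: "a = int N * j" using assms(2) by blast
  have "2 * pi * real_of_int a / real N = 2 * pi * real_of_int j" using assms(1) by (simp add: j field_simps)
  then show ?thesis by (simp add: E_def)
qed

lemma E_per: assumes "N > 0" shows "E N (a + int N * j) = E N a"
  using E_dvd[OF assms, of "int N * j"] by (simp add: E_add)

lemma E_eq1: assumes "N > 0" "E N a = 1" shows "int N dvd a"
proof -
  have "cos (2 * pi * real_of_int a / real N) = 1" using assms(2)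
    by (metis E_def cis.sel(1) one_complex.simps(1))
  then obtain n :: int where n: "2 * pi * real_of_int a / real N = real_of_int n * 2 * pi"
    by (auto simp: cos_one_2pi_int)
  then have "real_of_int a = real_of_int n * real N" using assms(1) by (simp add: field_simps)
  then have "a = n * int N" by (metis of_int_eq_iff of_int_mult of_int_of_nat_eq)
  then show ?thesis by simp
qed

lemma E_pow: "E N a ^ k = E N (int k * a)"
  by (induction k) (simp_all add: E_add distrib_right)

lemma E_orth: assumes "N > 0"
  shows "(\<Sum>k<N. E N (int k * m)) = (if int N dvd m then of_nat N else 0)"
proof (cases "int N dvd m")
  case True
  then have "\<And>k. E N (int k * m) = 1" using E_dvd[OF assms] by (simp add: dvd_mult)
  then show ?thesis using True by simp
next
  case False
  then have ne: "E N m \<noteq> 1" using E_eq1[OF assms] by blast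
  have "(\<Sum>k<N. E N (int k * m)) = (\<Sum>k<N. E N m ^ k)" by (simp add: E_pow)
  also have "\<dots> = (E N m ^ N - 1) / (E N m - 1)" using geometric_sum[OF ne] .
  also have "E N m ^ N = 1" using E_dvd[OF assms] by (simp add: E_pow)
  finally show ?thesis using False by simp
qed

definition pc :: "nat \<Rightarrow> (int \<Rightarrow> 'a) \<Rightarrow> bool" where
  "pc N X \<longleftrightarrow> (\<forall>n. X (n + int N) = X n)"

lemma pc_multN: "pc N X \<Longrightarrow> X (a + int N * int j) = X a"
proof (induction j arbitrary: a)
  case 0 then show ?case by simp
next
  case (Suc j)
  have "X (a + int N * int (Suc j)) = X ((a + int N * int j) + int N)" by (simp add: algebra_simps)
  also have "\<dots> = X (a + int N * int j)" using Suc.prems by (simp add: pc_def)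
  finally show ?case using Suc by simp
qed

lemma pc_mult: assumes "pc N X" shows "X (a + int N * j) = X a"
proof (cases "j \<ge> 0")
  case True
  then obtain m where "j = int m" by (metis nonneg_eq_int)
  then show ?thesis using pc_multN[OF assms] by simp
next
  case False
  then obtain m where m: "j = - int m" by (metis linorder_not_le neg_int_cases less_imp_le nonpos_int_cases)
  have "X a = X ((a + int N * j) + int N * int m)" by (simp add: m algebra_simps)
  also have "\<dots> = X (a + int N * j)" using pc_multN[OF assms] by blast
  finally show ?thesis by simp
qed

lemma pc_mod: assumes "pc N X" shows "X (a mod int N) = X a"
proof -
  have "a = a mod int N + int N * (a div int N)" by simp
  then show ?thesis using pc_mult[OF assms, of "a mod int N" "a div int N"] by metis
qed

lemma psum_shift1: fixes g :: "int \<Rightarrow> 'a::ab_group_add" assumes "pc N g" shows "(\<Sum>n<N. g (int n + 1)) = (\<Sum>n<N. g (int n))"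
proof -
  have "(\<Sum>n<Suc N. g (int n)) = g 0 + (\<Sum>n<N. g (int (Suc n)))" using sum.lessThan_Suc_shift[of "\<lambda>n. g (int n)" N] by simp
  moreover have "(\<Sum>n<Suc N. g (int n)) = (\<Sum>n<N. g (int n)) + g (int N)" by simp
  moreover have "g (int N) = g 0" using assms unfolding pc_def by (metis add_0)
  ultimately show ?thesis by (simp add: add.commute)
qed

lemma psum_shift_nat: fixes g :: "int \<Rightarrow> 'a::ab_group_add" assumes "pc N g" shows "(\<Sum>n<N. g (int n + int a)) = (\<Sum>n<N. g (int n))"
proof (induction a)
  case 0 then show ?case by simp
next
  case (Suc a)
  have p: "pc N (\<lambda>k. g (k + int a))" using assms unfolding pc_def by (metis add.assoc add.commute)
  have "(\<Sum>n<N. g (int n + int (Suc a))) = (\<Sum>n<N. (\<lambda>k. g (k + int a)) (int n + 1))" by (simp add: algebra_simps)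
  also have "\<dots> = (\<Sum>n<N. g (int n + int a))" using psum_shift1[OF p] by simp
  finally show ?case using Suc by simp
qed

lemma psum_shift: fixes g :: "int \<Rightarrow> 'a::ab_group_add" assumes "pc N g" shows "(\<Sum>n<N. g (int n + a)) = (\<Sum>n<N. g (int n))"
proof (cases "a \<ge> 0")
  case True
  then obtain m where "a = int m" by (metis nonneg_eq_int)
  then show ?thesis using psum_shift_nat[OF assms] by simp
next
  case False
  then obtain m where m: "a = - int m" by (metis linorder_not_le neg_int_cases less_imp_le nonpos_int_cases)
  have p: "pc N (\<lambda>k. g (k - int m))" using assms unfolding pc_def by (metis add_diff_eq diff_add_eq)
  have "(\<Sum>n<N. (\<lambda>k. g (k - int m)) (int n + int m)) = (\<Sum>n<N. (\<lambda>k. g (k - int m)) (int n))"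
    using psum_shift_nat[OF p] .
  then show ?thesis by (simp add: m)
qed

lemma psum_neg: fixes g :: "int \<Rightarrow> 'a::ab_group_add" assumes "pc N g" shows "(\<Sum>n<N. g (- int n)) = (\<Sum>n<N. g (int n))"
proof -
  have "(\<Sum>n<N. g (- int n)) = (\<Sum>n<N. g (int (N - n)))"
  proof (rule sum.cong)
    fix n assume "n \<in> {..<N}"
    then have "int (N - n) = - int n + int N" by auto
    then show "g (- int n) = g (int (N - n))" using assms unfolding pc_def by metis
  qed simp
  also have "\<dots> = (\<Sum>i<N. (\<lambda>j. g (int (Suc j))) (N - Suc i))"
    by (rule sum.cong) auto
  also have "\<dots> = (\<Sum>i<N. g (int (Suc i)))" by (rule sum.nat_diff_reindex)
  also have "\<dots> = (\<Sum>n<N. g (int n + 1))" by (simp add: add.commute)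
  also have "\<dots> = (\<Sum>n<N. g (int n))" using psum_shift1[OF assms] .
  finally show ?thesis .
qed

lemma psum_refl: fixes g :: "int \<Rightarrow> 'a::ab_group_add" assumes "pc N g" shows "(\<Sum>n<N. g (a - int n)) = (\<Sum>n<N. g (int n))"
proof -
  have p: "pc N (\<lambda>k. g (a + k))" using assms unfolding pc_def by (metis add.assoc)
  have "(\<Sum>n<N. g (a - int n)) = (\<Sum>n<N. (\<lambda>k. g (a + k)) (- int n))" by simp
  also have "\<dots> = (\<Sum>n<N. g (a + int n))" using psum_neg[OF p] by simp
  also have "\<dots> = (\<Sum>n<N. g (int n + a))" by (simp add: add.commute)
  finally show ?thesis using psum_shift[OF assms] by simp
qed

definition idftc :: "nat \<Rightarrow> (int \<Rightarrow> complex) \<Rightarrow> int \<Rightarrow> complex" where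
  "idftc N X k = (1 / of_nat N) * (\<Sum>n<N. X (int n) * cis (2 * pi * real_of_int k * real n / real N))"

lemma idft_re_idftc: "idft_re N X k = Re (idftc N X k)"
  by (simp add: idft_re_def idftc_def)

lemma idftc_E: "idftc N X k = (1 / of_nat N) * (\<Sum>n<N. X (int n) * E N (k * int n))"
  by (simp add: idftc_def E_def mult.assoc)

lemma dft_E: "dft N x n = (\<Sum>k<N. of_real (x (int k)) * E N (- (int k * n)))"
  by (simp add: dft_def E_def mult.assoc)

definition herm :: "nat \<Rightarrow> (int \<Rightarrow> complex) \<Rightarrow> bool" where
  "herm N X \<longleftrightarrow> pc N X \<and> (\<forall>n. X (- n) = cnj (X n))"

lemma idftc_real: assumes "N > 0" "herm N X" shows "cnj (idftc N X k) = idftc N X k"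
proof -
  define g where "g j = X j * E N (k * j)" for j
  have pg: "pc N g" using assms unfolding herm_def pc_def g_def
    by (metis E_per distrib_left mult.commute)
  have cg: "cnj (g j) = g (- j)" for j using assms(2) unfolding g_def herm_def
    by (simp add: E_neg[symmetric])
  have "cnj (idftc N X k) = (1 / of_nat N) * (\<Sum>n<N. cnj (g (int n)))"
    by (simp add: idftc_E g_def)
  also have "\<dots> = (1 / of_nat N) * (\<Sum>n<N. g (- int n))" by (simp add: cg)
  also have "\<dots> = (1 / of_nat N) * (\<Sum>n<N. g (int n))" using psum_neg[OF pg] by simp
  also have "\<dots> = idftc N X k" by (simp add: idftc_E g_def)
  finally show ?thesis .
qed

lemma of_real_Re_idftc: assumes "N > 0" "herm N X" shows "complex_of_real (Re (idftc N X k)) = idftc N X k"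
proof -
  have "cnj (idftc N X k) = idftc N X k" using idftc_real[OF assms] .
  then have "Im (idftc N X k) = 0" by (simp add: complex_eq_iff)
  then show ?thesis by (simp add: complex_eq_iff)
qed

lemma idftc_pc: assumes "N > 0" shows "pc N (idftc N X)"
proof -
  have "E N ((n + int N) * int m) = E N (n * int m)" for n m
    using E_per[OF assms, of "n * int m" "int m"] by (simp add: algebra_simps)
  then show ?thesis unfolding pc_def idftc_E by simp
qed

lemma dvd_iff_eq: assumes "0 \<le> j" "j < int N" shows "(int N dvd (k - j)) \<longleftrightarrow> j = k mod int N"
proof -
  have "j mod int N = j" using assms by simp
  then show ?thesis using mod_eq_dvd_iff[of k "int N" j] by auto
qed

lemma periodic_pc: "periodic_seq N x \<longleftrightarrow> pc N x"
  by (simp add: periodic_seq_def pc_def)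

lemma E_comb: "E N (a * b) * E N (- (a * c)) = E N (a * (b - c))"
  by (simp add: E_add[symmetric] algebra_simps)

lemma inv1: assumes "N > 0" "herm N X" "0 \<le> n" "n < int N"
  shows "dft N (\<lambda>k. Re (idftc N X k)) n = X n"
proof -
  have "dft N (\<lambda>k. Re (idftc N X k)) n = (\<Sum>k<N. idftc N X (int k) * E N (- (int k * n)))"
    by (simp add: dft_E of_real_Re_idftc[OF assms(1,2)])
  also have "\<dots> = (\<Sum>k<N. \<Sum>j<N. (1 / of_nat N) * (X (int j) * E N (int k * (int j - n))))"
  proof (rule sum.cong[OF refl])
    fix k
    show "idftc N X (int k) * E N (- (int k * n)) = (\<Sum>j<N. (1 / of_nat N) * (X (int j) * E N (int k * (int j - n))))"
      unfolding idftc_E sum_distrib_left sum_distrib_right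
      by (rule sum.cong[OF refl]) (simp add: E_comb[symmetric] mult_ac)
  qed
  also have "\<dots> = (1 / of_nat N) * (\<Sum>j<N. X (int j) * (\<Sum>k<N. E N (int k * (int j - n))))"
    by (subst sum.swap) (simp add: sum_distrib_left)
  also have "\<dots> = (1 / of_nat N) * (\<Sum>j<N. if j = nat n then X (int j) * of_nat N else 0)"
  proof -
    have "int N dvd (int j - n) \<longleftrightarrow> j = nat n" if "j < N" for j
    proof -
      have "int N dvd (int j - n) \<longleftrightarrow> int N dvd (n - int j)"
        by (metis dvd_minus_iff minus_diff_eq)
      also have "\<dots> \<longleftrightarrow> int j = n mod int N" using dvd_iff_eq[of "int j" N n] that by simp
      also have "n mod int N = n" using assms(3,4) by simp
      finally show ?thesis using assms(3) by auto
    qed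
    then show ?thesis by (intro arg_cong[where f="\<lambda>t. _ * t"] sum.cong) (auto simp: E_orth[OF assms(1)])
  qed
  also have "\<dots> = X n" using assms by simp
  finally show ?thesis .
qed

lemma inv2_c: assumes "N > 0" "periodic_seq N x"
  shows "idftc N (dft N x) k = of_real (x k)"
proof -
  have px: "pc N x" using assms(2) periodic_pc by blast
  have "idftc N (dft N x) k = (\<Sum>n<N. \<Sum>j<N. (1 / of_nat N) * (of_real (x (int j)) * E N (int n * (k - int j))))"
    unfolding idftc_E dft_E sum_distrib_left sum_distrib_right
    by (rule sum.cong[OF refl], rule sum.cong[OF refl]) (simp add: E_comb[symmetric] mult_ac)
  also have "\<dots> = (1 / of_nat N) * (\<Sum>j<N. of_real (x (int j)) * (\<Sum>n<N. E N (int n * (k - int j))))"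
    by (subst sum.swap) (simp add: sum_distrib_left)
  also have "\<dots> = (1 / of_nat N) * (\<Sum>j<N. if j = nat (k mod int N) then of_real (x (int j)) * of_nat N else 0)"
  proof -
    have "int N dvd (k - int j) \<longleftrightarrow> j = nat (k mod int N)" if "j < N" for j
      using dvd_iff_eq[of "int j" N k] that by auto
    then show ?thesis by (intro arg_cong[where f="\<lambda>t. _ * t"] sum.cong) (auto simp: E_orth[OF assms(1)])
  qed
  also have "\<dots> = of_real (x (k mod int N))"
  proof -
    have "nat (k mod int N) < N" using assms(1) by (simp add: nat_less_iff)
    then show ?thesis using assms(1) by simp
  qed
  also have "\<dots> = of_real (x k)" using pc_mod[OF px] by simp
  finally show ?thesis .
qed

lemma inv2: assumes "N > 0" "periodic_seq N x" shows "Re (idftc N (dft N x) k) = x k"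
  using inv2_c[OF assms] by simp

lemma dft_herm: assumes "N > 0" "periodic_seq N x" shows "herm N (dft N x)"
  unfolding herm_def pc_def
proof (intro conjI allI)
  fix n
  have "E N (- (int k * (n + int N))) = E N (- (int k * n))" for k
    using E_per[OF assms(1), of "- (int k * n)" "- int k"] by (simp add: algebra_simps)
  then show "dft N x (n + int N) = dft N x n"
    unfolding dft_E by simp
  show "dft N x (- n) = cnj (dft N x n)"
    unfolding dft_E by (simp add: E_neg)
qed

definition T :: "nat \<Rightarrow> (int \<Rightarrow> complex) \<Rightarrow> (int \<Rightarrow> real) \<Rightarrow> int \<Rightarrow> real" where
  "T N M x k = Re (idftc N (\<lambda>n. M n * dft N x n) k)"

lemma herm_mult: assumes "herm N A" "herm N B" shows "herm N (\<lambda>n. A n * B n)"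
  using assms unfolding herm_def pc_def by simp

lemma idftc_cong: assumes "\<And>n. n < N \<Longrightarrow> X (int n) = Y (int n)" shows "idftc N X k = idftc N Y k"
proof -
  have "(\<Sum>n<N. X (int n) * cis (2 * pi * real_of_int k * real n / real N)) =
        (\<Sum>n<N. Y (int n) * cis (2 * pi * real_of_int k * real n / real N))"
    by (rule sum.cong) (auto simp: assms)
  then show ?thesis unfolding idftc_def by simp
qed

lemma dft_T: assumes "N > 0" "herm N M" "periodic_seq N x" "0 \<le> n" "n < int N"
  shows "dft N (T N M x) n = M n * dft N x n"
  unfolding T_def[abs_def]
  using inv1[OF assms(1) herm_mult[OF assms(2) dft_herm[OF assms(1,3)]] assms(4,5)] by simp

lemma T_periodic: assumes "N > 0" shows "periodic_seq N (T N M x)"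
  using idftc_pc[OF assms] unfolding periodic_pc pc_def T_def by simp

lemma TT: assumes "N > 0" "herm N M" "herm N M'" "periodic_seq N x"
  shows "T N M (T N M' x) = T N (\<lambda>n. M n * M' n) x"
proof
  fix k
  have "idftc N (\<lambda>n. M n * dft N (T N M' x) n) k = idftc N (\<lambda>n. (M n * M' n) * dft N x n) k"
    by (rule idftc_cong) (simp add: dft_T[OF assms(1,3,4)])
  then show "T N M (T N M' x) k = T N (\<lambda>n. M n * M' n) x k" by (simp add: T_def)
qed

lemma T_one: assumes "N > 0" "periodic_seq N x" shows "T N (\<lambda>n. 1) x = x"
  using inv2[OF assms] unfolding T_def by simp

lemma dft_lin: "dft N (\<lambda>k. \<Sum>i\<in>I. c i * f i k) n = (\<Sum>i\<in>I. of_real (c i) * dft N (f i) n)"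
proof -
  have "dft N (\<lambda>k. \<Sum>i\<in>I. c i * f i k) n =
     (\<Sum>k<N. \<Sum>i\<in>I. of_real (c i) * (of_real (f i (int k)) * cis (- 2 * pi * real k * real_of_int n / real N)))"
    unfolding dft_def by (simp add: sum_distrib_right mult.assoc)
  also have "\<dots> = (\<Sum>i\<in>I. \<Sum>k<N. of_real (c i) * (of_real (f i (int k)) * cis (- 2 * pi * real k * real_of_int n / real N)))"
    by (rule sum.swap)
  also have "\<dots> = (\<Sum>i\<in>I. of_real (c i) * dft N (f i) n)"
    unfolding dft_def by (simp add: sum_distrib_left)
  finally show ?thesis .
qed

lemma idftc_lin: "idftc N (\<lambda>n. \<Sum>i\<in>I. a i * X i n) k = (\<Sum>i\<in>I. a i * idftc N (X i) k)"
proof -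
  have "idftc N (\<lambda>n. \<Sum>i\<in>I. a i * X i n) k =
     (\<Sum>n<N. \<Sum>i\<in>I. a i * ((1 / of_nat N) * (X i (int n) * cis (2 * pi * real_of_int k * real n / real N))))"
    unfolding idftc_def by (simp add: sum_distrib_right sum_distrib_left mult_ac)
  also have "\<dots> = (\<Sum>i\<in>I. \<Sum>n<N. a i * ((1 / of_nat N) * (X i (int n) * cis (2 * pi * real_of_int k * real n / real N))))"
    by (rule sum.swap)
  also have "\<dots> = (\<Sum>i\<in>I. a i * idftc N (X i) k)"
    unfolding idftc_def by (simp add: sum_distrib_left)
  finally show ?thesis .
qed

lemma T_lin: "T N M (\<lambda>k. \<Sum>i\<in>I. c i * f i k) k = (\<Sum>i\<in>I. c i * T N M (f i) k)"
proof -
  have "idftc N (\<lambda>n. M n * dft N (\<lambda>k. \<Sum>i\<in>I. c i * f i k) n) k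
      = idftc N (\<lambda>n. \<Sum>i\<in>I. of_real (c i) * (M n * dft N (f i) n)) k"
    by (simp add: dft_lin sum_distrib_left mult_ac)
  also have "\<dots> = (\<Sum>i\<in>I. of_real (c i) * idftc N (\<lambda>n. M n * dft N (f i) n) k)"
    by (rule idftc_lin)
  finally show ?thesis unfolding T_def by (simp add: Re_sum)
qed

lemma parseval: assumes "N > 0" "herm N G"
  shows "complex_of_real (ipN N f (\<lambda>k. Re (idftc N G k))) = (1 / of_nat N) * (\<Sum>j<N. dft N f (int j) * cnj (G (int j)))"
proof -
  have c: "complex_of_real (Re (idftc N G k)) = (1 / of_nat N) * (\<Sum>j<N. cnj (G (int j)) * E N (- (k * int j)))" for k
  proof -
    have "complex_of_real (Re (idftc N G k)) = cnj (idftc N G k)"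
      using of_real_Re_idftc[OF assms] idftc_real[OF assms] by metis
    also have "\<dots> = (1 / of_nat N) * (\<Sum>j<N. cnj (G (int j)) * E N (- (k * int j)))"
      by (simp add: idftc_E E_neg)
    finally show ?thesis .
  qed
  have "complex_of_real (ipN N f (\<lambda>k. Re (idftc N G k))) =
      (\<Sum>k<N. \<Sum>j<N. (1 / of_nat N) * (cnj (G (int j)) * (of_real (f (int k)) * E N (- (int k * int j)))))"
    unfolding ipN_def of_real_sum of_real_mult c sum_distrib_left
    by (rule sum.cong[OF refl], rule sum.cong[OF refl]) (simp add: mult_ac)
  also have "\<dots> = (\<Sum>j<N. \<Sum>k<N. (1 / of_nat N) * (cnj (G (int j)) * (of_real (f (int k)) * E N (- (int k * int j)))))"
    by (rule sum.swap)
  also have "\<dots> = (1 / of_nat N) * (\<Sum>j<N. dft N f (int j) * cnj (G (int j)))"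
    unfolding dft_E sum_distrib_left sum_distrib_right
    by (rule sum.cong[OF refl], rule sum.cong[OF refl]) (simp add: mult_ac)
  finally show ?thesis .
qed

lemma ip_T: assumes "N > 0" "herm N M" "\<And>n. M n * cnj (M n) = 1" "periodic_seq N f" "periodic_seq N g"
  shows "ipN N (T N M f) (T N M g) = ipN N f g"
proof -
  have hg: "herm N (\<lambda>n. M n * dft N g n)" by (rule herm_mult[OF assms(2) dft_herm[OF assms(1,5)]])
  have "complex_of_real (ipN N (T N M f) (T N M g)) =
     (1 / of_nat N) * (\<Sum>j<N. dft N (T N M f) (int j) * cnj (M (int j) * dft N g (int j)))"
    unfolding T_def[of N M g] using parseval[OF assms(1) hg] by simp
  also have "\<dots> = (1 / of_nat N) * (\<Sum>j<N. dft N f (int j) * cnj (dft N g (int j)))"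
  proof -
    have "dft N (T N M f) (int j) * cnj (M (int j) * dft N g (int j)) = dft N f (int j) * cnj (dft N g (int j))"
      if "j \<in> {..<N}" for j
    proof -
      have "dft N (T N M f) (int j) = M (int j) * dft N f (int j)"
        using dft_T[OF assms(1,2,4)] that by simp
      then have "dft N (T N M f) (int j) * cnj (M (int j) * dft N g (int j)) =
          (M (int j) * cnj (M (int j))) * (dft N f (int j) * cnj (dft N g (int j)))"
        by (simp add: mult_ac)
      then show ?thesis using assms(3)[of "int j"] by simp
    qed
    then have "(\<Sum>j<N. dft N (T N M f) (int j) * cnj (M (int j) * dft N g (int j))) = (\<Sum>j<N. dft N f (int j) * cnj (dft N g (int j)))"
      by (rule sum.cong[OF refl])
    then show ?thesis by simp
  qed
  also have "\<dots> = complex_of_real (ipN N f (\<lambda>k. Re (idftc N (dft N g) k)))"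
    using parseval[OF assms(1) dft_herm[OF assms(1,5)]] by simp
  also have "(\<lambda>k. Re (idftc N (dft N g) k)) = g" using inv2[OF assms(1,5)] by auto
  finally show ?thesis by simp
qed

definition Mm :: "nat \<Rightarrow> int \<Rightarrow> complex" where
  "Mm N n = (let m = n mod int N in if 0 < m \<and> m < int N div 2 then - \<i> else if int N div 2 < m then \<i> else 1)"

lemma hat_phi_Mm: "hat_phi r N \<mu> n = Mm N n * hat_psi r N \<mu> n"
  by (simp add: hat_phi_def Mm_def Let_def)

lemma Mm_unit: "Mm N n * cnj (Mm N n) = 1"
  by (simp add: Mm_def Let_def)

lemma herm_Mm: assumes "N > 0" "even N" shows "herm N (Mm N)"
  unfolding herm_def pc_def
proof (intro conjI allI)
  fix n
  show "Mm N (n + int N) = Mm N n" by (simp add: Mm_def)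
  obtain h where h: "N = 2 * h" using assms(2) by blast
  define m where "m = n mod int N"
  have m: "0 \<le> m" "m < int N" using assms(1) by (simp_all add: m_def)
  have nm: "(- n) mod int N = (if m = 0 then 0 else int N - m)"
    by (simp add: m_def zmod_zminus1_eq_if)
  have hd: "int N div 2 = int h" using h by simp
  have A: "Mm N n = (if 0 < m \<and> m < int h then - \<i> else if int h < m then \<i> else 1)"
    unfolding Mm_def Let_def m_def[symmetric] hd by simp
  have B: "Mm N (- n) = (if m = 0 then 1 else if 0 < int N - m \<and> int N - m < int h then - \<i> else if int h < int N - m then \<i> else 1)"
    unfolding Mm_def Let_def nm hd by simp
  have N2: "int N = 2 * int h" using h by simp
  consider "m = 0" | "0 < m \<and> m < int h" | "m = int h" | "int h < m" using m by linarith
  then show "Mm N (- n) = cnj (Mm N n)"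
  proof cases
    case 1 then show ?thesis using A B by simp
  next
    case 2
    then have "\<not> (0 < int N - m \<and> int N - m < int h)" "int h < int N - m" "m \<noteq> 0" using N2 by linarith+
    then show ?thesis using A B 2 by simp
  next
    case 3
    then have e: "int N - m = int h" "m \<noteq> 0" using N2 m by linarith+
    have "Mm N (- n) = 1" using B e by simp
    moreover have "Mm N n = 1" using A 3 by simp
    ultimately show ?thesis by simp
  next
    case 4
    then have "0 < int N - m \<and> int N - m < int h" "m \<noteq> 0" "\<not> (0 < m \<and> m < int h)" using N2 m by linarith+
    then show ?thesis using A B 4 by simp
  qed
qed

lemma neg_pow2: "(- (x::real)) ^ (2*r) = x ^ (2*r)"
  by (simp add: power_mult)

lemma neg_pow4: "(- (x::real)) ^ (4*r) = x ^ (4*r)"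
proof -
  have "(4::nat) * r = 2 * (2 * r)" by simp
  then show ?thesis by (metis neg_pow2)
qed

lemma theta_per: assumes "N > 0"
  shows "pi * real_of_int (n + int N) / real N = pi * real_of_int n / real N + pi"
  using assms by (simp add: field_simps)

lemma U_per: assumes "N > 0" shows "U_fun r N (n + int N) = U_fun r N n"
  unfolding U_fun_def theta_per[OF assms] by (simp add: cos_periodic_pi sin_periodic_pi neg_pow4)

lemma U_neg: "U_fun r N (- n) = U_fun r N n"
  unfolding U_fun_def by (simp add: neg_pow4)

lemma E_alpha: "cis (2 * pi * real_of_int n / real N) = E N n"
  by (simp add: E_def)

lemma herm_psi: assumes "N > 0" shows "herm N (hat_psi r N \<mu>)"
  unfolding herm_def pc_def
proof (intro conjI allI)
  fix n
  have b1: "beta_fun r N (n + int N) = beta_fun r N n"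
    unfolding beta_fun_def U_per[OF assms] theta_per[OF assms] by (simp add: cos_periodic_pi neg_pow2)
  have a1: "alpha_fun r N (n + int N) = alpha_fun r N n"
  proof -
    have "E N (n + int N) = E N n" using E_per[OF assms, of n 1] by simp
    then show ?thesis
      unfolding alpha_fun_def U_per[OF assms] E_alpha theta_per[OF assms] by (simp add: sin_periodic_pi neg_pow2)
  qed
  show "hat_psi r N \<mu> (n + int N) = hat_psi r N \<mu> n"
    by (simp add: hat_psi_def b1 a1)
  have b2: "beta_fun r N (- n) = cnj (beta_fun r N n)"
    unfolding beta_fun_def U_neg by simp
  have a2: "alpha_fun r N (- n) = cnj (alpha_fun r N n)"
    unfolding alpha_fun_def U_neg E_alpha by (simp add: E_neg neg_pow2)
  show "hat_psi r N \<mu> (- n) = cnj (hat_psi r N \<mu> n)"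
    by (simp add: hat_psi_def b2 a2)
qed

lemma idftc_shift: "idftc N X (k - a) = idftc N (\<lambda>n. X n * E N (- (a * n))) k"
proof -
  have "E N ((k - a) * int n) = E N (k * int n) * E N (- (a * int n))" for n
    by (simp add: E_add[symmetric] algebra_simps)
  then show ?thesis unfolding idftc_E by (simp add: mult_ac)
qed

lemma herm_E: assumes "N > 0" shows "herm N (\<lambda>n. E N (- (a * n)))"
  unfolding herm_def pc_def
proof (intro conjI allI)
  fix n
  show "E N (- (a * (n + int N))) = E N (- (a * n))"
    using E_per[OF assms, of "- (a * n)" "- a"] by (simp add: algebra_simps)
  show "E N (- (a * - n)) = cnj (E N (- (a * n)))"
    by (simp add: E_neg[symmetric])
qed

lemma T_psi: assumes "N > 0" "even N"
  shows "T N (Mm N) (\<lambda>k. psi1 r N \<mu> (k - a)) = (\<lambda>k. phi1 r N \<mu> (k - a))"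
proof
  fix k
  define Pa where "Pa n = hat_psi r N \<mu> n * E N (- (a * n))" for n
  have hP: "herm N Pa" unfolding Pa_def by (rule herm_mult[OF herm_psi[OF assms(1)] herm_E[OF assms(1)]])
  have e1: "(\<lambda>k. psi1 r N \<mu> (k - a)) = (\<lambda>k. Re (idftc N Pa k))"
    unfolding psi1_def idft_re_idftc idftc_shift Pa_def ..
  have "idftc N (\<lambda>n. Mm N n * dft N (\<lambda>k. Re (idftc N Pa k)) n) k = idftc N (\<lambda>n. Mm N n * Pa n) k"
    by (rule idftc_cong) (simp add: inv1[OF assms(1) hP])
  also have "\<dots> = idftc N (\<lambda>n. hat_phi r N \<mu> n * E N (- (a * n))) k"
    unfolding Pa_def hat_phi_Mm by (simp add: mult_ac)
  also have "\<dots> = idftc N (hat_phi r N \<mu>) (k - a)" by (simp add: idftc_shift)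
  finally show "T N (Mm N) (\<lambda>k. psi1 r N \<mu> (k - a)) k = phi1 r N \<mu> (k - a)"
    unfolding e1 T_def phi1_def idft_re_idftc by simp
qed

lemma herm_cnj: assumes "herm N M" shows "herm N (\<lambda>n. cnj (M n))"
  using assms unfolding herm_def pc_def by simp

lemma ipN_comm: "ipN N x y = ipN N y x"
  unfolding ipN_def by (simp add: mult.commute)

lemma ipN_lin_left: "ipN N (\<lambda>k. \<Sum>i\<in>L. c i * h i k) z = (\<Sum>i\<in>L. c i * ipN N (h i) z)"
proof -
  have "ipN N (\<lambda>k. \<Sum>i\<in>L. c i * h i k) z = (\<Sum>k<N. \<Sum>i\<in>L. c i * (h i (int k) * z (int k)))"
    unfolding ipN_def by (simp add: sum_distrib_right sum_distrib_left mult_ac)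
  also have "\<dots> = (\<Sum>i\<in>L. \<Sum>k<N. c i * (h i (int k) * z (int k)))" by (rule sum.swap)
  also have "\<dots> = (\<Sum>i\<in>L. c i * ipN N (h i) z)" unfolding ipN_def by (simp add: sum_distrib_left)
  finally show ?thesis .
qed

lemma ipN_lin_right: "ipN N z (\<lambda>k. \<Sum>i\<in>L. c i * h i k) = (\<Sum>i\<in>L. c i * ipN N z (h i))"
  using ipN_lin_left[of N c h L z] by (simp add: ipN_comm)

lemma ipN_diff_left: "ipN N (\<lambda>k. x k - y k) z = ipN N x z - ipN N y z"
  unfolding ipN_def by (simp add: left_diff_distrib sum_subtractf)

lemma sum_split2: "(\<Sum>i\<in>{0::nat,1}\<times>L. H i) = (\<Sum>l\<in>L. H (0,l)) + (\<Sum>l\<in>L. H (1,l))"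
proof -
  have "(\<Sum>i\<in>{0::nat,1}\<times>L. H i) = (\<Sum>\<mu>\<in>{0::nat,1}. \<Sum>l\<in>L. H (\<mu>,l))"
    by (simp add: sum.cartesian_product split_def)
  then show ?thesis by simp
qed

lemma delta_sum: fixes l h :: nat assumes "l < h" shows "(\<lambda>k. \<Sum>l'<h. (if l' = l then 1 else 0) * (F l' k :: real)) = F l"
proof
  fix k
  have "(\<Sum>l'<h. (if l' = l then 1 else 0) * F l' k) = (\<Sum>l'<h. if l' = l then F l k else 0)"
    by (rule sum.cong) auto
  also have "\<dots> = F l k" using assms by (subst sum.delta) simp_all
  finally show "(\<Sum>l'<h. (if l' = l then 1 else 0) * F l' k) = F l k" .
qed

lemma sqrt_half: "1 / sqrt (1/2) = sqrt (2::real)"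
  by (simp add: real_sqrt_divide)

lemma half_angle: assumes "N = 2 * h" "h > 0"
  shows "pi * real_of_int (int N div 2) / real N = pi / 2"
proof -
  have "int N div 2 = int h" using assms by simp
  then show ?thesis using assms by (simp add: field_simps)
qed

lemma full_angle: assumes "N = 2 * h" "h > 0"
  shows "2 * pi * real_of_int (int N div 2) / real N = pi"
proof -
  have "int N div 2 = int h" using assms by simp
  then show ?thesis using assms by (simp add: field_simps)
qed

lemma vals: assumes "r \<ge> 1" "N = 2 * h" "h > 0"
  shows "beta_fun r N 0 = sqrt 2" "beta_fun r N (int N div 2) = 0"
    "alpha_fun r N 0 = 0" "alpha_fun r N (int N div 2) = - sqrt 2"
proof -
  have r4: "4 * r \<noteq> 0" "2 * r \<noteq> 0" using assms(1) by auto
  have U0: "U_fun r N 0 = 1/2" unfolding U_fun_def using r4 by simp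
  have Uh: "U_fun r N (int N div 2) = 1/2" unfolding U_fun_def half_angle[OF assms(2,3)] using r4 by simp
  show "beta_fun r N 0 = sqrt 2" unfolding beta_fun_def U0 using sqrt_half by simp
  show "beta_fun r N (int N div 2) = 0" unfolding beta_fun_def half_angle[OF assms(2,3)] using r4 by simp
  show "alpha_fun r N 0 = 0" unfolding alpha_fun_def using r4 by simp
  show "alpha_fun r N (int N div 2) = - sqrt 2"
    unfolding alpha_fun_def Uh half_angle[OF assms(2,3)] full_angle[OF assms(2,3)] using sqrt_half by simp
qed

lemma dft_phi: assumes "N > 0" "even N" "0 \<le> n" "n < int N"
  shows "dft N (phi1 r N \<mu>) n = hat_phi r N \<mu> n"
proof -
  have e1: "phi1 r N \<mu> = (\<lambda>k. Re (idftc N (hat_phi r N \<mu>) k))"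
    by (rule ext) (simp add: phi1_def idft_re_idftc)
  have e2: "hat_phi r N \<mu> = (\<lambda>n. Mm N n * hat_psi r N \<mu> n)" by (rule ext) (rule hat_phi_Mm)
  have "herm N (hat_phi r N \<mu>)" unfolding e2 by (rule herm_mult[OF herm_Mm[OF assms(1,2)] herm_psi[OF assms(1)]])
  then show ?thesis unfolding e1 using inv1[OF assms(1) _ assms(3,4)] by simp
qed

theorem proposition4p1:
  fixes J r N :: nat
  assumes "J \<ge> 1" and "r \<ge> 1" and "N = 2 ^ J"
    and psi_onb: "orthonormal_basis_Pi N ({0,1} \<times> {..<N div 2})
                    (\<lambda>(\<mu>, l) k. psi1 r N \<mu> (k - 2 * int l))"
  shows "orthonormal_basis_Pi N ({0,1} \<times> {..<N div 2})
           (\<lambda>(\<mu>, l) k. phi1 r N \<mu> (k - 2 * int l))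
    \<and> shift_span N (phi1 r N 1) = orth_complement_Pi N (shift_span N (phi1 r N 0))
    \<and> (\<forall>\<mu>\<in>{0,1}. \<forall>x. periodic_seq N x \<longrightarrow>
           is_orth_proj N (shift_span N (phi1 r N \<mu>)) x
             (\<lambda>k. \<Sum>l<N div 2. (\<Sum>j<N. phi1 r N \<mu> (int j - 2 * int l) * x (int j))
                                  * phi1 r N \<mu> (k - 2 * int l)))
    \<and> (\<forall>n. 0 \<le> n \<and> n < int N \<longrightarrow> dft N (phi1 r N 0) n =
           (if 0 < n \<and> n < int N div 2 then - \<i> * beta_fun r N n
            else if int N div 2 < n then \<i> * beta_fun r N n
            else if n = 0 then complex_of_real (sqrt 2) else 0))
    \<and> (\<forall>n. 0 \<le> n \<and> n < int N \<longrightarrow> dft N (phi1 r N 1) n =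
           (if 0 < n \<and> n < int N div 2 then - \<i> * alpha_fun r N n
            else if int N div 2 < n then \<i> * alpha_fun r N n
            else if n = 0 then 0 else - complex_of_real (sqrt 2)))"
proof -
  have N0: "N > 0" using assms(3) by simp
  have Nev: "even N" using assms(1,3) by simp
  define h where "h = N div 2"
  have Nh: "N = 2 * h" "h > 0" using Nev N0 unfolding h_def by auto
  define I where "I = ({0::nat,1} \<times> {..<N div 2})"
  define f where "f = (\<lambda>(\<mu>::nat, l::nat) k. phi1 r N \<mu> (k - 2 * int l))"
  define g where "g = (\<lambda>(\<mu>::nat, l::nat) k. psi1 r N \<mu> (k - 2 * int l))"
  define P where "P \<mu> l = (\<lambda>k. phi1 r N \<mu> (k - 2 * int l))" for \<mu> l
  have fP: "f (\<mu>, l) = P \<mu> l" for \<mu> l by (simp add: f_def P_def)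
  have Tg: "T N (Mm N) (g i) = f i" for i
    by (cases i) (simp add: f_def g_def T_psi[OF N0 Nev])
  have gper: "\<And>i. i \<in> I \<Longrightarrow> periodic_seq N (g i)"
    and gorth: "\<And>i j. i \<in> I \<Longrightarrow> j \<in> I \<Longrightarrow> ipN N (g i) (g j) = (if i = j then 1 else 0)"
    and gcomp: "\<And>x. periodic_seq N x \<Longrightarrow> (\<exists>c. x = (\<lambda>k. \<Sum>i\<in>I. c i * g i k))"
    using psi_onb unfolding orthonormal_basis_Pi_def I_def g_def by blast+
  have fper: "periodic_seq N (f i)" for i
  proof (cases i)
    case (Pair \<mu> l)
    have pc: "pc N (idftc N (hat_phi r N \<mu>))" by (rule idftc_pc[OF N0])
    show ?thesis unfolding Pair f_def periodic_seq_def phi1_def idft_re_idftc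
    proof (simp, intro allI)
      fix k
      have "k + int N - 2 * int l = (k - 2 * int l) + int N" by simp
      then show "Re (idftc N (hat_phi r N \<mu>) (k + int N - 2 * int l)) = Re (idftc N (hat_phi r N \<mu>) (k - 2 * int l))"
        using pc unfolding pc_def by metis
    qed
  qed
  have forth: "ipN N (f i) (f j) = (if i = j then 1 else 0)" if "i \<in> I" "j \<in> I" for i j
  proof -
    have "ipN N (f i) (f j) = ipN N (T N (Mm N) (g i)) (T N (Mm N) (g j))" by (simp add: Tg)
    also have "\<dots> = ipN N (g i) (g j)"
      by (rule ip_T[OF N0 herm_Mm[OF N0 Nev] Mm_unit gper[OF that(1)] gper[OF that(2)]])
    finally show ?thesis using gorth[OF that] by simp
  qed
  have fcomp: "\<exists>c. x = (\<lambda>k. \<Sum>i\<in>I. c i * f i k)" if px: "periodic_seq N x" for x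
  proof -
    define y where "y = T N (\<lambda>n. cnj (Mm N n)) x"
    have py: "periodic_seq N y" unfolding y_def by (rule T_periodic[OF N0])
    obtain c where c: "y = (\<lambda>k. \<Sum>i\<in>I. c i * g i k)" using gcomp[OF py] by blast
    have "x = T N (\<lambda>n. 1) x" using T_one[OF N0 px] by simp
    also have "(\<lambda>n. 1::complex) = (\<lambda>n. Mm N n * cnj (Mm N n))" using Mm_unit by simp
    also have "T N (\<lambda>n. Mm N n * cnj (Mm N n)) x = T N (Mm N) y"
      unfolding y_def using TT[OF N0 herm_Mm[OF N0 Nev] herm_cnj[OF herm_Mm[OF N0 Nev]] px] by simp
    also have "\<dots> = (\<lambda>k. \<Sum>i\<in>I. c i * f i k)" unfolding c by (rule ext) (simp add: T_lin Tg)
    finally show ?thesis by blast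
  qed
  have part1: "orthonormal_basis_Pi N I f"
    unfolding orthonormal_basis_Pi_def using fper forth fcomp by blast
  have Pper: "periodic_seq N (P \<mu> l)" for \<mu> l using fper[of "(\<mu>, l)"] by (simp add: fP)
  have Porth: "ipN N (P \<mu> l) (P \<nu> l') = (if \<mu> = \<nu> \<and> l = l' then 1 else 0)"
    if "\<mu> \<in> {0,1}" "\<nu> \<in> {0,1}" "l < N div 2" "l' < N div 2" for \<mu> \<nu> l l'
    using forth[of "(\<mu>, l)" "(\<nu>, l')"] that by (simp add: fP I_def)
  have span_iff: "z \<in> shift_span N (phi1 r N \<mu>) \<longleftrightarrow> (\<exists>c. z = (\<lambda>k. \<Sum>l<N div 2. c l * P \<mu> l k))" for z \<mu>
    unfolding shift_span_def P_def by auto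
  have Pin: "P \<mu> l \<in> shift_span N (phi1 r N \<mu>)" if "l < N div 2" for \<mu> l
    unfolding span_iff using delta_sum[OF that, of "\<lambda>l k. P \<mu> l k"] by metis
  have sum_per: "periodic_seq N (\<lambda>k. \<Sum>l<N div 2. c l * P \<mu> l k)" for c \<mu>
    using Pper unfolding periodic_seq_def by simp
  have part2: "shift_span N (phi1 r N 1) = orth_complement_Pi N (shift_span N (phi1 r N 0))"
  proof
    show "shift_span N (phi1 r N 1) \<subseteq> orth_complement_Pi N (shift_span N (phi1 r N 0))"
    proof
      fix y assume "y \<in> shift_span N (phi1 r N 1)"
      then obtain c where c: "y = (\<lambda>k. \<Sum>l<N div 2. c l * P 1 l k)" unfolding span_iff by blast
      have "ipN N y z = 0" if zin: "z \<in> shift_span N (phi1 r N 0)" for z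
      proof -
        obtain d where d: "z = (\<lambda>k. \<Sum>l<N div 2. d l * P 0 l k)" using zin unfolding span_iff by blast
        have "ipN N y z = (\<Sum>l<N div 2. c l * (\<Sum>l'<N div 2. d l' * ipN N (P 1 l) (P 0 l')))"
          unfolding c d ipN_lin_left ipN_lin_right ..
        also have "\<dots> = 0" by (simp add: Porth)
        finally show ?thesis .
      qed
      then show "y \<in> orth_complement_Pi N (shift_span N (phi1 r N 0))"
        unfolding orth_complement_Pi_def using sum_per c by auto
    qed
    show "orth_complement_Pi N (shift_span N (phi1 r N 0)) \<subseteq> shift_span N (phi1 r N 1)"
    proof
      fix y assume "y \<in> orth_complement_Pi N (shift_span N (phi1 r N 0))"
      then have py: "periodic_seq N y" and oy: "\<And>z. z \<in> shift_span N (phi1 r N 0) \<Longrightarrow> ipN N y z = 0"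
        unfolding orth_complement_Pi_def by auto
      obtain c where c: "y = (\<lambda>k. \<Sum>i\<in>I. c i * f i k)" using fcomp[OF py] by blast
      have c0: "c (0, l) = 0" if "l < N div 2" for l
      proof -
        have "0 = ipN N y (f (0, l))" using oy[OF Pin[OF that]] by (simp add: fP)
        also have "\<dots> = (\<Sum>i\<in>I. c i * ipN N (f i) (f (0, l)))" unfolding c ipN_lin_left ..
        also have "\<dots> = (\<Sum>i\<in>I. if i = (0, l) then c i else 0)"
          using that by (intro sum.cong refl) (simp add: forth I_def)
        also have "\<dots> = c (0, l)" using that by (simp add: I_def)
        finally show ?thesis by simp
      qed
      have "y = (\<lambda>k. \<Sum>l<N div 2. c (1, l) * P 1 l k)"
        unfolding c I_def sum_split2 by (simp add: fP c0)
      then show "y \<in> shift_span N (phi1 r N 1)" unfolding span_iff by (intro exI[of _ "\<lambda>l. c (1, l)"])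
    qed
  qed
  have part3: "is_orth_proj N (shift_span N (phi1 r N \<mu>)) x
             (\<lambda>k. \<Sum>l<N div 2. (\<Sum>j<N. phi1 r N \<mu> (int j - 2 * int l) * x (int j))
                                  * phi1 r N \<mu> (k - 2 * int l))" if "\<mu> \<in> {0,1}" for \<mu> x
  proof -
    define C where "C l = ipN N (P \<mu> l) x" for l
    have yeq: "(\<lambda>k. \<Sum>l<N div 2. (\<Sum>j<N. phi1 r N \<mu> (int j - 2 * int l) * x (int j))
                                  * phi1 r N \<mu> (k - 2 * int l)) = (\<lambda>k. \<Sum>l<N div 2. C l * P \<mu> l k)"
      by (simp add: C_def P_def ipN_def)
    have o: "ipN N (\<lambda>k. x k - (\<Sum>l<N div 2. C l * P \<mu> l k)) (P \<mu> l') = 0" if "l' < N div 2" for l'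
    proof -
      have "ipN N (\<lambda>k. x k - (\<Sum>l<N div 2. C l * P \<mu> l k)) (P \<mu> l') =
            ipN N x (P \<mu> l') - (\<Sum>l<N div 2. C l * ipN N (P \<mu> l) (P \<mu> l'))"
        by (simp add: ipN_diff_left ipN_lin_left)
      also have "(\<Sum>l<N div 2. C l * ipN N (P \<mu> l) (P \<mu> l')) = (\<Sum>l<N div 2. if l = l' then C l else 0)"
        using that \<open>\<mu> \<in> {0,1}\<close> by (intro sum.cong refl) (simp add: Porth)
      also have "\<dots> = C l'" using that by simp
      finally show ?thesis by (simp add: C_def ipN_comm)
    qed
    show ?thesis unfolding yeq is_orth_proj_def
    proof
      show "(\<lambda>k. \<Sum>l<N div 2. C l * P \<mu> l k) \<in> shift_span N (phi1 r N \<mu>)" unfolding span_iff by blast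
      show "\<forall>z\<in>shift_span N (phi1 r N \<mu>). ipN N (\<lambda>k. x k - (\<Sum>l<N div 2. C l * P \<mu> l k)) z = 0"
      proof
        fix z assume "z \<in> shift_span N (phi1 r N \<mu>)"
        then obtain d where d: "z = (\<lambda>k. \<Sum>l<N div 2. d l * P \<mu> l k)" unfolding span_iff by blast
        show "ipN N (\<lambda>k. x k - (\<Sum>l<N div 2. C l * P \<mu> l k)) z = 0"
          unfolding d ipN_lin_right by (simp add: o)
      qed
    qed
  qed
  have part4: "dft N (phi1 r N \<mu>) n =
       (if 0 < n \<and> n < int N div 2 then - \<i> * hat_psi r N \<mu> n
        else if int N div 2 < n then \<i> * hat_psi r N \<mu> n
        else if n = 0 then hat_psi r N \<mu> 0 else hat_psi r N \<mu> (int N div 2))"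
    if "0 \<le> n" "n < int N" for n \<mu>
  proof -
    have "n mod int N = n" using that by simp
    moreover have "\<not> (0 < n \<and> n < int N div 2) \<Longrightarrow> \<not> int N div 2 < n \<Longrightarrow> n \<noteq> 0 \<Longrightarrow> n = int N div 2"
      using that by linarith
    ultimately show ?thesis using dft_phi[OF N0 Nev that] unfolding hat_phi_def Let_def by auto
  qed
  have v: "beta_fun r N 0 = sqrt 2" "beta_fun r N (int N div 2) = 0"
    "alpha_fun r N 0 = 0" "alpha_fun r N (int N div 2) = - sqrt 2" using vals[OF assms(2) Nh] by auto
  show ?thesis
  proof (intro conjI)
    show "orthonormal_basis_Pi N ({0, 1} \<times> {..<N div 2}) (\<lambda>(\<mu>, l) k. phi1 r N \<mu> (k - 2 * int l))"
      using part1 unfolding I_def f_def .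
    show "shift_span N (phi1 r N 1) = orth_complement_Pi N (shift_span N (phi1 r N 0))" by (rule part2)
    show "\<forall>\<mu>\<in>{0,1}. \<forall>x. periodic_seq N x \<longrightarrow>
           is_orth_proj N (shift_span N (phi1 r N \<mu>)) x
             (\<lambda>k. \<Sum>l<N div 2. (\<Sum>j<N. phi1 r N \<mu> (int j - 2 * int l) * x (int j))
                                  * phi1 r N \<mu> (k - 2 * int l))" using part3 by blast
    show "\<forall>n. 0 \<le> n \<and> n < int N \<longrightarrow> dft N (phi1 r N 0) n =
           (if 0 < n \<and> n < int N div 2 then - \<i> * beta_fun r N n
            else if int N div 2 < n then \<i> * beta_fun r N n
            else if n = 0 then complex_of_real (sqrt 2) else 0)"
    proof (intro allI impI)
      fix n :: int assume "0 \<le> n \<and> n < int N"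
      then show "dft N (phi1 r N 0) n =
           (if 0 < n \<and> n < int N div 2 then - \<i> * beta_fun r N n
            else if int N div 2 < n then \<i> * beta_fun r N n
            else if n = 0 then complex_of_real (sqrt 2) else 0)"
        using part4[of n 0] v by (simp add: hat_psi_def)
    qed
    show "\<forall>n. 0 \<le> n \<and> n < int N \<longrightarrow> dft N (phi1 r N 1) n =
           (if 0 < n \<and> n < int N div 2 then - \<i> * alpha_fun r N n
            else if int N div 2 < n then \<i> * alpha_fun r N n
            else if n = 0 then 0 else - complex_of_real (sqrt 2))"
    proof (intro allI impI)
      fix n :: int assume "0 \<le> n \<and> n < int N"
      then show "dft N (phi1 r N 1) n =
           (if 0 < n \<and> n < int N div 2 then - \<i> * alpha_fun r N n
            else if int N div 2 < n then \<i> * alpha_fun r N n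
            else if n = 0 then 0 else - complex_of_real (sqrt 2))"
        using part4[of n 1] v by (simp add: hat_psi_def)
    qed
  qed
qed

end
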